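(* In the setting below, if $\mathbb{P}(\tilde W^-_0>f(0))=1$, then $p_-+p_+=1$.
   Context: All Brownian motions have a common variance $\sigma^2>0$ per unit time. Let $f:[-1,1]\to\mathbb{R}$ be continuous with $f(0)=0$. Let $W^-$ be a Brownian motion on $[-1,1]$ and define $\tilde W^-_t=\sup_{-1\le s\le t}(f(s)+W^-_t-W^-_s)$ for $t\in[-1,0]$ (Brownian motion started at $f(-1)$ reflected above $f$); on $[0,1]$, $\tilde W^-_t=\tilde W^-_0+W^-_t-W^-_0$ for $t\le\sigma_-\wedge1$ where $\sigma_-=\inf\{t\ge0:\tilde W^-_t=f(t)\}$, and $\tilde W^-_t=f(t)$ for $t\ge\sigma_-$. Let $p_-=\mathbb{P}(\sigma_-<1)$. Symmetrically, with a Brownian motion $W^+$ on $[-1,1]$, let $\tilde W^+_t=\sup_{t\le s\le1}(f(s)+W^+_t-W^+_s)$ for $t\in[0,1]$, and on $[-1,0]$, $\tilde W^+_t=\tilde W^+_0+W^+_t-W^+_0$ for $t\ge\sigma_+$ where $\sigma_+=\sup\{t\le0:\tilde W^+_t=f(t)\}$, absorbed into $f$ before $\sigma_+$. Let $p_+=\mathbb{P}(\sigma_+>-1)$. *)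

theory Defs
  imports "HOL-Probability.Probability"
begin

text \<open>The starting value is arbitrary.\<close>
definition brownian_motion_on ::
  "'a measure \<Rightarrow> real \<Rightarrow> real \<Rightarrow> real \<Rightarrow> (real \<Rightarrow> 'a \<Rightarrow> real) \<Rightarrow> bool" where
  "brownian_motion_on M v a b W \<longleftrightarrow>
     prob_space M \<and>
     (\<forall>t\<in>{a..b}. W t \<in> borel_measurable M) \<and>
     (\<forall>\<omega>\<in>space M. continuous_on {a..b} (\<lambda>t. W t \<omega>)) \<and>
     (\<forall>s t. a \<le> s \<and> s < t \<and> t \<le> b \<longrightarrow>
        distributed M lborel (\<lambda>\<omega>. W t \<omega> - W s \<omega>) (normal_density 0 (sqrt (v * (t - s))))) \<and>
     (\<forall>ts :: real list. sorted ts \<and> set ts \<subseteq> {a..b} \<longrightarrow>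
        prob_space.indep_vars M (\<lambda>_. borel)
          (\<lambda>i \<omega>. W (ts ! Suc i) \<omega> - W (ts ! i) \<omega>) {..<length ts - 1})"

text \<open>Value at time 0 of the Brownian motion reflected above f on [-1,0]
  (tilde W^-_0 = sup_{-1 <= s <= 0} (f s + W_0 - W_s)).\<close>
definition reflMinus0 :: "(real \<Rightarrow> real) \<Rightarrow> (real \<Rightarrow> 'a \<Rightarrow> real) \<Rightarrow> 'a \<Rightarrow> real" where
  "reflMinus0 f W \<omega> = (SUP s\<in>{-1..0}. f s + W 0 \<omega> - W s \<omega>)"

text \<open>sigma_- = inf {t >= 0 : tilde W^-_t = f t} (within the time horizon [0,1]),
  where on [0, sigma_-] tilde W^-_t = tilde W^-_0 + W_t - W_0; inf of the empty set is +infinity.\<close>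
definition sigmaMinus :: "(real \<Rightarrow> real) \<Rightarrow> (real \<Rightarrow> 'a \<Rightarrow> real) \<Rightarrow> 'a \<Rightarrow> ereal" where
  "sigmaMinus f W \<omega> =
     (INF t\<in>{t\<in>{0..1}. reflMinus0 f W \<omega> + W t \<omega> - W 0 \<omega> = f t}. ereal t)"

text \<open>Value at time 0 of the Brownian motion reflected above f backwards from time 1
  (tilde W^+_0 = sup_{0 <= s <= 1} (f s + W_0 - W_s)).\<close>
definition reflPlus0 :: "(real \<Rightarrow> real) \<Rightarrow> (real \<Rightarrow> 'a \<Rightarrow> real) \<Rightarrow> 'a \<Rightarrow> real" where
  "reflPlus0 f W \<omega> = (SUP s\<in>{0..1}. f s + W 0 \<omega> - W s \<omega>)"

text \<open>sigma_+ = sup {t <= 0 : tilde W^+_t = f t} (within [-1,0]), where on [sigma_+, 0]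
  tilde W^+_t = tilde W^+_0 + W_t - W_0; sup of the empty set is -infinity.\<close>
definition sigmaPlus :: "(real \<Rightarrow> real) \<Rightarrow> (real \<Rightarrow> 'a \<Rightarrow> real) \<Rightarrow> 'a \<Rightarrow> ereal" where
  "sigmaPlus f W \<omega> =
     (SUP t\<in>{t\<in>{-1..0}. reflPlus0 f W \<omega> + W t \<omega> - W 0 \<omega> = f t}. ereal t)"

end

theory Submission
  imports Defs
begin


definition gr :: "real \<Rightarrow> real \<Rightarrow> nat \<Rightarrow> nat \<Rightarrow> real" where
  "gr a b n j = a + real j * (b - a) / 2^n"

definition gmx :: "(real \<Rightarrow> real) \<Rightarrow> real \<Rightarrow> real \<Rightarrow> nat \<Rightarrow> real" where
  "gmx h a b n = Max ((\<lambda>j. h (gr a b n j)) ` {..2^n})"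

lemma gr_in: assumes "a \<le> b" "j \<le> 2^n" shows "gr a b n j \<in> {a..b}"
proof -
  have "real j / 2^n \<le> 1" using assms(2) by (simp add: field_simps)
  hence "real j * (b - a) / 2^n \<le> 1 * (b - a)" using assms(1)
    by (metis mult.commute mult_right_mono diff_ge_0_iff_ge times_divide_eq_right)
  moreover have "real j * (b - a) / 2^n \<ge> 0" using assms(1) by simp
  ultimately show ?thesis by (simp add: gr_def)
qed

lemma gr_Suc: "gr a b (Suc n) (2*j) = gr a b n j"
  by (simp add: gr_def field_simps)

lemma gr_last: "gr a b n (2^n) = b"
  by (simp add: gr_def)

lemma gr_first: "gr a b n 0 = a"
  by (simp add: gr_def)

lemma gmx_incseq: "incseq (gmx h a b)"
proof (rule incseq_SucI)
  fix n
  have "(\<lambda>j. h (gr a b n j)) ` {..2^n} \<subseteq> (\<lambda>j. h (gr a b (Suc n) j)) ` {..2^Suc n}"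
  proof
    fix y assume "y \<in> (\<lambda>j. h (gr a b n j)) ` {..2^n}"
    then obtain j where j: "j \<le> 2^n" "y = h (gr a b n j)" by auto
    then show "y \<in> (\<lambda>j. h (gr a b (Suc n) j)) ` {..2^Suc n}"
      by (intro image_eqI[of _ _ "2*j"]) (auto simp: gr_Suc)
  qed
  then show "gmx h a b n \<le> gmx h a b (Suc n)" unfolding gmx_def
    by (intro Max_mono) auto
qed

lemma gmx_le: assumes "a \<le> b" "continuous_on {a..b} h"
  shows "gmx h a b n \<le> (SUP t\<in>{a..b}. h t)"
proof -
  have bdd: "bdd_above (h ` {a..b})"
    by (meson compact_Icc compact_continuous_image compact_imp_bounded bounded_imp_bdd_above assms(2))
  show ?thesis unfolding gmx_def
    using assms gr_in bdd by (subst Max_le_iff) (auto intro!: cSUP_upper)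
qed

lemma gmx_tendsto: assumes ab: "a \<le> b" and cont: "continuous_on {a..b} h"
  shows "gmx h a b \<longlonglongrightarrow> (SUP t\<in>{a..b}. h t)"
proof -
  let ?S = "SUP t\<in>{a..b}. h t"
  obtain t0 where t0: "t0 \<in> {a..b}" "\<And>y. y \<in> {a..b} \<Longrightarrow> h y \<le> h t0"
    using continuous_attains_sup[of "{a..b}" h] cont ab by auto
  have bdd: "bdd_above (h ` {a..b})"
    by (meson compact_Icc compact_continuous_image compact_imp_bounded bounded_imp_bdd_above assms(2))
  have S: "?S = h t0"
    using t0 ab by (intro antisym cSUP_least cSUP_upper bdd) auto
  have uc: "uniformly_continuous_on {a..b} h"
    using compact_uniformly_continuous cont compact_Icc by blast
  show ?thesis
  proof (rule LIMSEQ_I)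
    fix e :: real assume e: "e > 0"
    obtain d where d: "d > 0" "\<And>x y. x \<in> {a..b} \<Longrightarrow> y \<in> {a..b} \<Longrightarrow> dist y x < d \<Longrightarrow> dist (h y) (h x) < e"
      using uc e unfolding uniformly_continuous_on_def by metis
    obtain N :: nat where N: "(b - a) / real (Suc N) < d"
    proof -
      obtain N :: nat where "(b - a) / d < real N" using reals_Archimedean2 by blast
      hence "(b - a) < d * real (Suc N)" using d by (simp add: field_simps) 
      thus ?thesis using that[of N] d by (simp add: field_simps)
    qed
    show "\<exists>no. \<forall>n\<ge>no. norm (gmx h a b n - ?S) < e"
    proof (intro exI allI impI)
      fix n assume n: "n \<ge> N"
      have p: "(2::real)^n \<ge> real (Suc n)"
      proof -
        have "Suc n \<le> 2^n" by (induction n) auto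
        thus ?thesis by (metis of_nat_le_iff of_nat_numeral of_nat_power)
      qed
      have step: "(b - a) / 2^n < d"
      proof -
        have "(b - a) / 2^n \<le> (b - a) / real (Suc n)" using p ab by (intro divide_left_mono) auto
        also have "\<dots> \<le> (b - a) / real (Suc N)" using n ab by (intro divide_left_mono) auto
        finally show ?thesis using N by linarith
      qed
      define x where "x = (t0 - a) * 2^n / (b - a)"
      define j where "j = nat \<lfloor>x\<rfloor>"
      have x0: "x \<ge> 0" using t0 ab by (auto simp: x_def)
      have xle: "x \<le> 2^n"
      proof (cases "a = b")
        case True thus ?thesis by (simp add: x_def)
      next
        case False
        hence "b - a > 0" using ab by simp
        moreover have "(t0 - a) \<le> (b - a)" using t0 by auto
        ultimately show ?thesis unfolding x_def by (simp add: field_simps)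
      qed
      have jx: "real j \<le> x" "x < real j + 1" using x0 by (auto simp: j_def)
      have jle: "j \<le> 2^n"
      proof -
        have "real j \<le> 2^n" using jx xle by linarith
        thus ?thesis by (metis of_nat_le_iff of_nat_numeral of_nat_power)
      qed
      have close: "dist (gr a b n j) t0 < d"
      proof (cases "a = b")
        case True thus ?thesis using t0 d by (simp add: gr_def)
      next
        case False
        hence ba: "b - a > 0" using ab by simp
        have "gr a b n j = a + real j * (b - a) / 2^n" by (simp add: gr_def)
        have e1: "x * (b - a) / 2^n = t0 - a" using ba by (simp add: x_def field_simps)
        have "real j * (b - a) / 2^n \<le> x * (b - a) / 2^n"
          using jx ba by (intro divide_right_mono mult_right_mono) auto
        moreover have "x * (b - a) / 2^n < (real j + 1) * (b - a) / 2^n"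
          using jx ba by (intro divide_strict_right_mono mult_strict_right_mono) auto
        moreover have "(real j + 1) * (b - a) / 2^n = real j * (b - a) / 2^n + (b - a) / 2^n"
          by (simp add: field_simps)
        ultimately have "gr a b n j \<le> t0" "t0 - gr a b n j < (b - a) / 2^n"
          using e1 unfolding gr_def by linarith+
        thus ?thesis using step by (simp add: dist_real_def)
      qed
      have "h (gr a b n j) > h t0 - e"
        using d(2)[OF t0(1) gr_in[OF ab jle] close] by (simp add: dist_real_def)
      moreover have "h (gr a b n j) \<le> gmx h a b n" unfolding gmx_def using jle by (intro Max_ge) auto
      moreover have "gmx h a b n \<le> ?S" by (rule gmx_le[OF ab cont])
      ultimately show "norm (gmx h a b n - ?S) < e" using S by simp
    qed
  qed
qed




lemma bmD:
  assumes "brownian_motion_on M v a b W"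
  shows "prob_space M" "\<And>t. t \<in> {a..b} \<Longrightarrow> W t \<in> borel_measurable M"
    "\<And>\<omega>. \<omega> \<in> space M \<Longrightarrow> continuous_on {a..b} (\<lambda>t. W t \<omega>)"
    "\<And>s t. a \<le> s \<Longrightarrow> s < t \<Longrightarrow> t \<le> b \<Longrightarrow>
        distributed M lborel (\<lambda>\<omega>. W t \<omega> - W s \<omega>) (normal_density 0 (sqrt (v * (t - s))))"
    "\<And>ts. sorted ts \<Longrightarrow> set ts \<subseteq> {a..b} \<Longrightarrow>
        prob_space.indep_vars M (\<lambda>_. borel)
          (\<lambda>i \<omega>. W (ts ! Suc i) \<omega> - W (ts ! i) \<omega>) {..<length ts - 1}"
  using assms unfolding brownian_motion_on_def by auto

lemma bm_law:
  assumes bm: "brownian_motion_on M v (-1) 1 W"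
    and h: "\<And>i. i < L \<Longrightarrow> h i \<in> {-1..1}" "\<And>i. Suc i < L \<Longrightarrow> h i < h (Suc i)"
    and L: "L \<ge> 2"
  shows "distr M (PiM {..<L-1} (\<lambda>_. borel)) (\<lambda>\<omega>. \<lambda>i\<in>{..<L-1}. W (h (Suc i)) \<omega> - W (h i) \<omega>)
     = PiM {..<L-1} (\<lambda>i. density lborel (normal_density 0 (sqrt (v * (h (Suc i) - h i)))))"
proof -
  interpret prob_space M using bmD(1)[OF bm] .
  define ts where "ts = map h [0..<L]"
  have len: "length ts = L" by (simp add: ts_def)
  have nth: "\<And>i. i < L \<Longrightarrow> ts ! i = h i" by (simp add: ts_def)
  have sorted: "sorted ts" unfolding sorted_iff_nth_Suc len
    using h(2) nth by (metis Suc_lessD less_imp_le)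
  have set: "set ts \<subseteq> {-1..1}" using h(1) by (auto simp: ts_def)
  have ind0: "indep_vars (\<lambda>_. borel) (\<lambda>i \<omega>. W (ts ! Suc i) \<omega> - W (ts ! i) \<omega>) {..<length ts - 1}"
    using bmD(5)[OF bm sorted set] .
  have ind: "indep_vars (\<lambda>_. borel) (\<lambda>i \<omega>. W (h (Suc i)) \<omega> - W (h i) \<omega>) {..<L - 1}"
    using ind0 unfolding len by (rule indep_vars_cong[THEN iffD1, rotated -1]) (auto simp: nth)
  have dist: "\<And>i. i < L - 1 \<Longrightarrow> distributed M lborel (\<lambda>\<omega>. W (h (Suc i)) \<omega> - W (h i) \<omega>)
       (normal_density 0 (sqrt (v * (h (Suc i) - h i))))"
    using h by (intro bmD(4)[OF bm]) auto
  have rv: "\<And>i. i \<in> {..<L-1} \<Longrightarrow> random_variable borel (\<lambda>\<omega>. W (h (Suc i)) \<omega> - W (h i) \<omega>)"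
    using h bmD(2)[OF bm] by (intro borel_measurable_diff) auto
  have "0 \<in> {..<L-1}" using L by simp
  hence ne: "{..<L-1} \<noteq> {}" by blast
  have "distr M (PiM {..<L-1} (\<lambda>_. borel)) (\<lambda>\<omega>. \<lambda>i\<in>{..<L-1}. W (h (Suc i)) \<omega> - W (h i) \<omega>)
     = PiM {..<L-1} (\<lambda>i. distr M borel (\<lambda>\<omega>. W (h (Suc i)) \<omega> - W (h i) \<omega>))"
    using indep_vars_iff_distr_eq_PiM'[OF ne rv] ind by simp
  also have "\<dots> = PiM {..<L-1} (\<lambda>i. density lborel (normal_density 0 (sqrt (v * (h (Suc i) - h i)))))"
  proof (rule PiM_cong)
    fix i assume i: "i \<in> {..<L-1}"
    have "distr M borel (\<lambda>\<omega>. W (h (Suc i)) \<omega> - W (h i) \<omega>) = distr M lborel (\<lambda>\<omega>. W (h (Suc i)) \<omega> - W (h i) \<omega>)"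
      by (rule distr_cong) auto
    also have "\<dots> = density lborel (normal_density 0 (sqrt (v * (h (Suc i) - h i))))"
      using dist[of i] i unfolding distributed_def by auto
    finally show "distr M borel (\<lambda>\<omega>. W (h (Suc i)) \<omega> - W (h i) \<omega>) = density lborel (normal_density 0 (sqrt (v * (h (Suc i) - h i))))" .
  qed simp
  finally show ?thesis .
qed




definition gpath :: "(real \<Rightarrow> real) \<Rightarrow> (real \<Rightarrow> 'a \<Rightarrow> real) \<Rightarrow> 'a \<Rightarrow> real \<Rightarrow> real" where
  "gpath f W \<omega> t = f t - (W t \<omega> - W 0 \<omega>)"

definition cat2 :: "nat \<Rightarrow> (nat \<Rightarrow> real) \<Rightarrow> (nat \<Rightarrow> real) \<Rightarrow> nat \<Rightarrow> real" where
  "cat2 N p q j = (if j \<le> N then p j else q (j - Suc N))"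

lemma gr_strict: "a < b \<Longrightarrow> j < k \<Longrightarrow> gr a b n j < gr a b n k"
  by (simp add: gr_def divide_strict_right_mono mult_strict_right_mono)

lemma meas_psum: assumes "(j::nat) \<le> K" shows "(\<lambda>x. \<Sum>i<j. x i) \<in> borel_measurable (PiM {..<K} (\<lambda>_. (borel :: real measure)))"
proof (rule borel_measurable_sum)
  fix i assume "i \<in> {..<j}"
  with assms have "i \<in> {..<K}" by simp
  thus "(\<lambda>x. x i) \<in> borel_measurable (PiM {..<K} (\<lambda>_. (borel :: real measure)))"
    by (rule measurable_component_singleton)
qed
lemma telesc: "(\<Sum>i<j. (W::real\<Rightarrow>'a\<Rightarrow>real) ((h::nat\<Rightarrow>real) (Suc i)) \<omega> - W (h i) \<omega>) = W (h j) \<omega> - W (h 0) \<omega>"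
  by (rule sum_lessThan_telescope[of "\<lambda>i. W (h i) \<omega>"])

lemma restr_sum: assumes "(j::nat) \<le> K" shows "(\<Sum>i<j. (\<lambda>i\<in>{..<K}. g i) i) = (\<Sum>i<j. g i)"
proof (intro sum.cong refl)
  fix i assume "i \<in> {..<j}"
  with assms have "i < K" by simp
  thus "(\<lambda>i\<in>{..<K}. g i) i = g i" by simp
qed

lemma two_le_pows: "2 \<le> 2^n + 2^m + (1::nat)"
proof -
  have "1 \<le> (2::nat)^n" "1 \<le> (2::nat)^m" by simp_all
  thus ?thesis by linarith
qed

definition keyh :: "nat \<Rightarrow> nat \<Rightarrow> nat \<Rightarrow> real" where
  "keyh n m = cat2 (2^n) (gr (-1) 0 n) (\<lambda>k. gr 0 1 m (Suc k))"

lemma keyh_range: "j < 2^n + 2^m + 1 \<Longrightarrow> keyh n m j \<in> {-1..1}"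
proof -
  assume j: "j < 2^n + 2^m + 1"
  show ?thesis
  proof (cases "j \<le> 2^n")
    case True thus ?thesis using gr_in[of "-1" 0 j n] by (auto simp: keyh_def cat2_def)
  next
    case False
    hence "Suc (j - Suc (2^n)) \<le> 2^m" using j by auto
    thus ?thesis using False gr_in[of 0 1 "Suc (j - Suc (2^n))" m] by (auto simp: keyh_def cat2_def)
  qed
qed

lemma keyh_mono: "Suc j < 2^n + 2^m + 1 \<Longrightarrow> keyh n m j < keyh n m (Suc j)"
proof -
  assume j: "Suc j < 2^n + 2^m + 1"
  consider "Suc j \<le> 2^n" | "j = 2^n" | "j > 2^n" by linarith
  thus ?thesis
  proof cases
    case 1 thus ?thesis by (auto simp: keyh_def cat2_def intro!: gr_strict)
  next
    case 2 thus ?thesis by (auto simp: keyh_def cat2_def gr_last gr_def)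
  next
    case 3
    hence "Suc j - Suc (2^n) = Suc (j - Suc (2^n))" by auto
    thus ?thesis using 3 by (auto simp: keyh_def cat2_def intro!: gr_strict)
  qed
qed

lemma keyh_zero: "keyh n m (2^n) = 0"
  by (simp add: keyh_def cat2_def gr_last)

lemma keyh_left: "j \<le> 2^n \<Longrightarrow> keyh n m j = gr (-1) 0 n j"
  by (simp add: keyh_def cat2_def)

lemma keyh_right: "k \<le> 2^m \<Longrightarrow> keyh n m (2^n + k) = gr 0 1 m k"
proof (cases k)
  case 0 thus ?thesis by (simp add: keyh_def cat2_def gr_last gr_first)
next
  case (Suc k') thus ?thesis by (simp add: keyh_def cat2_def)
qed

definition keyPhi :: "(real \<Rightarrow> real) \<Rightarrow> nat \<Rightarrow> nat \<Rightarrow> (nat \<Rightarrow> real) \<Rightarrow> real \<times> real" where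
  "keyPhi f n m x =
    (Max ((\<lambda>j. f (keyh n m j) - ((\<Sum>i<j. x i) - (\<Sum>i<2^n. x i))) ` {..2^n}),
     Max ((\<lambda>k. f (keyh n m (2^n + k)) - ((\<Sum>i<2^n+k. x i) - (\<Sum>i<2^n. x i))) ` {..2^m}))"

lemma key_law:
  assumes bm: "brownian_motion_on M v (-1) 1 W"
  shows "distr M borel (\<lambda>\<omega>. (gmx (gpath f W \<omega>) (-1) 0 n, gmx (gpath f W \<omega>) 0 1 m))
    = distr (PiM {..<2^n + 2^m} (\<lambda>i. density lborel (normal_density 0 (sqrt (v * (keyh n m (Suc i) - keyh n m i))))))
        borel (keyPhi f n m)"
proof -
  let ?L = "2^n + 2^m + 1 :: nat"
  let ?h = "keyh n m"
  let ?D = "\<lambda>\<omega>. \<lambda>i\<in>{..<?L-1}. W (?h (Suc i)) \<omega> - W (?h i) \<omega>"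
  have law: "distr M (PiM {..<?L-1} (\<lambda>_. borel)) ?D
     = PiM {..<?L-1} (\<lambda>i. density lborel (normal_density 0 (sqrt (v * (?h (Suc i) - ?h i)))))"
    apply (rule bm_law[of M v W "?L" "keyh n m"])
    using bm keyh_range keyh_mono two_le_pows[of n m] by auto
  have Dm: "?D \<in> measurable M (PiM {..<?L-1} (\<lambda>_. borel))"
    using bmD(2)[OF bm] keyh_range
    by (intro measurable_restrict borel_measurable_diff) auto
  have Phim: "keyPhi f n m \<in> borel_measurable (PiM {..<?L-1} (\<lambda>_. borel))"
    unfolding keyPhi_def
    by (intro borel_measurable_Pair borel_measurable_Max borel_measurable_diff borel_measurable_const
          meas_psum) auto
  have eq: "keyPhi f n m (?D \<omega>) = (gmx (gpath f W \<omega>) (-1) 0 n, gmx (gpath f W \<omega>) 0 1 m)" for \<omega>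
  proof -
    have S: "\<And>j. j \<le> ?L - 1 \<Longrightarrow> (\<Sum>i<j. ?D \<omega> i) = W (?h j) \<omega> - W (?h 0) \<omega>"
      by (subst restr_sum) (auto simp: telesc)
    have SN: "(\<Sum>i<2^n. ?D \<omega> i) = W (?h (2^n)) \<omega> - W (?h 0) \<omega>" by (rule S) simp
    have 1: "(\<lambda>j. f (?h j) - ((\<Sum>i<j. ?D \<omega> i) - (\<Sum>i<2^n. ?D \<omega> i))) ` {..2^n}
          = (\<lambda>j. gpath f W \<omega> (gr (-1) 0 n j)) ` {..2^n}"
    proof (intro image_cong refl)
      fix j :: nat assume j: "j \<in> {..2^n}"
      have Sj: "(\<Sum>i<j. ?D \<omega> i) = W (?h j) \<omega> - W (?h 0) \<omega>" by (rule S) (use j in simp)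
      show "f (?h j) - ((\<Sum>i<j. ?D \<omega> i) - (\<Sum>i<2^n. ?D \<omega> i)) = gpath f W \<omega> (gr (-1) 0 n j)"
        unfolding Sj SN using j by (simp add: keyh_left keyh_zero gpath_def)
    qed
    have 2: "(\<lambda>k. f (?h (2^n + k)) - ((\<Sum>i<2^n+k. ?D \<omega> i) - (\<Sum>i<2^n. ?D \<omega> i))) ` {..2^m}
          = (\<lambda>k. gpath f W \<omega> (gr 0 1 m k)) ` {..2^m}"
    proof (intro image_cong refl)
      fix k :: nat assume k: "k \<in> {..2^m}"
      have Sk: "(\<Sum>i<2^n+k. ?D \<omega> i) = W (?h (2^n+k)) \<omega> - W (?h 0) \<omega>" by (rule S) (use k in simp)
      show "f (?h (2^n+k)) - ((\<Sum>i<2^n+k. ?D \<omega> i) - (\<Sum>i<2^n. ?D \<omega> i)) = gpath f W \<omega> (gr 0 1 m k)"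
        unfolding Sk SN using k by (simp add: keyh_right keyh_zero gpath_def)
    qed
    show ?thesis unfolding keyPhi_def gmx_def 1 2 ..
  qed
  have "distr M borel (\<lambda>\<omega>. (gmx (gpath f W \<omega>) (-1) 0 n, gmx (gpath f W \<omega>) 0 1 m))
      = distr M borel (\<lambda>\<omega>. keyPhi f n m (?D \<omega>))"
    by (rule distr_cong) (use eq in auto)
  also have "\<dots> = distr (distr M (PiM {..<?L-1} (\<lambda>_. borel)) ?D) borel (keyPhi f n m)"
    by (rule distr_distr[OF Phim Dm, symmetric, unfolded comp_def])
  also have "\<dots> = distr (PiM {..<2^n + 2^m} (\<lambda>i. density lborel (normal_density 0 (sqrt (v * (keyh n m (Suc i) - keyh n m i))))))
        borel (keyPhi f n m)" unfolding law by simp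
  finally show ?thesis .
qed




lemma lim_rep1:
  fixes X :: "nat \<Rightarrow> 'a \<Rightarrow> real" and Y' X' :: "'a \<Rightarrow> real"
  assumes P: "prob_space M"
    and m: "\<And>n. X n \<in> borel_measurable M" "Y' \<in> borel_measurable M" "X' \<in> borel_measurable M"
    and inc: "\<And>\<omega>. \<omega> \<in> space M \<Longrightarrow> incseq (\<lambda>n. X n \<omega>)"
    and lim: "\<And>\<omega>. \<omega> \<in> space M \<Longrightarrow> (\<lambda>n. X n \<omega>) \<longlonglongrightarrow> X' \<omega>"
  shows "(\<lambda>n. measure M {\<omega>\<in>space M. Y' \<omega> \<le> X n \<omega> - 1 / real (Suc n)})
          \<longlonglongrightarrow> measure M {\<omega>\<in>space M. X' \<omega> > Y' \<omega>}"
proof -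
  interpret prob_space M by (rule P)
  let ?F = "\<lambda>n. {\<omega>\<in>space M. Y' \<omega> \<le> X n \<omega> - 1 / real (Suc n)}"
  have "(\<lambda>n. measure M (?F n)) \<longlonglongrightarrow> measure M (\<Union>n. ?F n)"
  proof (rule finite_Lim_measure_incseq)
    show "range ?F \<subseteq> sets M" using m by auto
    show "incseq ?F"
    proof (rule incseq_SucI, safe)
      fix n \<omega> assume "\<omega> \<in> space M" "Y' \<omega> \<le> X n \<omega> - 1 / real (Suc n)"
      moreover have "X n \<omega> \<le> X (Suc n) \<omega>" using incseq_SucD[OF inc[OF \<open>\<omega> \<in> space M\<close>], of n] by simp
      moreover have "1 / real (Suc (Suc n)) \<le> 1 / real (Suc n)" by (simp add: frac_le)
      ultimately show "Y' \<omega> \<le> X (Suc n) \<omega> - 1 / real (Suc (Suc n))" by linarith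
    qed
  qed
  also have "(\<Union>n. ?F n) = {\<omega>\<in>space M. X' \<omega> > Y' \<omega>}"
  proof safe
    fix n \<omega> assume w: "\<omega> \<in> space M" "Y' \<omega> \<le> X n \<omega> - 1 / real (Suc n)"
    have "X n \<omega> \<le> X' \<omega>" by (rule incseq_le[OF inc[OF w(1)] lim[OF w(1)]])
    moreover have "1 / real (Suc n) > 0" by simp
    ultimately show "X' \<omega> > Y' \<omega>" using w by linarith
  next
    fix \<omega> assume w: "\<omega> \<in> space M" "X' \<omega> > Y' \<omega>"
    have "(\<lambda>n. X n \<omega> - 1 / real (Suc n)) \<longlonglongrightarrow> X' \<omega> - 0"
      using tendsto_diff[OF lim[OF w(1)] LIMSEQ_inverse_real_of_nat] by (simp add: divide_inverse)
    then have "eventually (\<lambda>n. Y' \<omega> < X n \<omega> - 1 / real (Suc n)) sequentially"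
      using w(2) by (intro order_tendstoD(1)) auto
    then obtain n where "Y' \<omega> < X n \<omega> - 1 / real (Suc n)" by (auto simp: eventually_sequentially)
    thus "\<omega> \<in> (\<Union>n. ?F n)" using w by (auto intro!: exI[of _ n])
  qed
  finally show ?thesis .
qed

lemma lim_rep2:
  fixes Y :: "nat \<Rightarrow> 'a \<Rightarrow> real" and Y' Z :: "'a \<Rightarrow> real"
  assumes P: "prob_space M"
    and m: "\<And>n. Y n \<in> borel_measurable M" "Y' \<in> borel_measurable M" "Z \<in> borel_measurable M"
    and inc: "\<And>\<omega>. \<omega> \<in> space M \<Longrightarrow> incseq (\<lambda>n. Y n \<omega>)"
    and lim: "\<And>\<omega>. \<omega> \<in> space M \<Longrightarrow> (\<lambda>n. Y n \<omega>) \<longlonglongrightarrow> Y' \<omega>"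
  shows "(\<lambda>m. measure M {\<omega>\<in>space M. Y m \<omega> \<le> Z \<omega>})
          \<longlonglongrightarrow> measure M {\<omega>\<in>space M. Y' \<omega> \<le> Z \<omega>}"
proof -
  interpret prob_space M by (rule P)
  let ?G = "\<lambda>n. {\<omega>\<in>space M. Y n \<omega> \<le> Z \<omega>}"
  have "(\<lambda>n. measure M (?G n)) \<longlonglongrightarrow> measure M (\<Inter>n. ?G n)"
  proof (rule finite_Lim_measure_decseq)
    show "range ?G \<subseteq> sets M" using m by auto
    show "decseq ?G"
    proof (rule decseq_SucI, safe)
      fix n \<omega> assume "\<omega> \<in> space M" "Y (Suc n) \<omega> \<le> Z \<omega>"
      moreover have "Y n \<omega> \<le> Y (Suc n) \<omega>" using incseq_SucD[OF inc[OF \<open>\<omega> \<in> space M\<close>], of n] by simp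
      ultimately show "Y n \<omega> \<le> Z \<omega>" by linarith
    qed
  qed
  also have "(\<Inter>n. ?G n) = {\<omega>\<in>space M. Y' \<omega> \<le> Z \<omega>}"
  proof (rule set_eqI, rule iffI)
    fix \<omega> assume "\<omega> \<in> (\<Inter>n. ?G n)"
    then have w: "\<omega> \<in> space M" "\<And>n. Y n \<omega> \<le> Z \<omega>" by auto
    have "Y' \<omega> \<le> Z \<omega>" by (rule LIMSEQ_le_const2[OF lim[OF w(1)]]) (use w in auto)
    thus "\<omega> \<in> {\<omega>\<in>space M. Y' \<omega> \<le> Z \<omega>}" using w by auto
  next
    fix \<omega> assume w: "\<omega> \<in> {\<omega>\<in>space M. Y' \<omega> \<le> Z \<omega>}"
    have "\<And>n. Y n \<omega> \<le> Y' \<omega>" using w by (intro incseq_le[OF inc lim]) auto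
    thus "\<omega> \<in> (\<Inter>n. ?G n)" using w by (auto intro: order_trans)
  qed
  finally show ?thesis .
qed



definition gsup :: "(real \<Rightarrow> real) \<Rightarrow> (real \<Rightarrow> 'a \<Rightarrow> real) \<Rightarrow> real \<Rightarrow> real \<Rightarrow> 'a \<Rightarrow> real" where
  "gsup f W a b \<omega> = (SUP t\<in>{a..b}. gpath f W \<omega> t)"

lemma path_cont:
  assumes f: "continuous_on {-1..1} f" and bm: "brownian_motion_on M v (-1) 1 W"
    and w: "\<omega> \<in> space M" and ab: "-1 \<le> a" "b \<le> 1"
  shows "continuous_on {a..b} (gpath f W \<omega>)"
proof -
  have s: "{a..b} \<subseteq> {-1..1}" using ab by auto
  show ?thesis unfolding gpath_def
    by (intro continuous_on_diff continuous_on_const continuous_on_subset[OF f s]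
        continuous_on_subset[OF bmD(3)[OF bm w] s])
qed

lemma gmx_meas:
  assumes bm: "brownian_motion_on M v (-1) 1 W" and ab: "-1 \<le> a" "a \<le> b" "b \<le> 1"
  shows "(\<lambda>\<omega>. gmx (gpath f W \<omega>) a b n) \<in> borel_measurable M"
  unfolding gmx_def gpath_def
proof (rule borel_measurable_Max, simp)
  fix j :: nat assume "j \<in> {..2^n}"
  then have "gr a b n j \<in> {-1..1}" using gr_in[OF ab(2), of j n] ab by auto
  then show "(\<lambda>\<omega>. f (gr a b n j) - (W (gr a b n j) \<omega> - W 0 \<omega>)) \<in> borel_measurable M"
    using bmD(2)[OF bm] by (intro borel_measurable_diff borel_measurable_const) auto
qed

lemma gsup_lim:
  assumes f: "continuous_on {-1..1} f" and bm: "brownian_motion_on M v (-1) 1 W"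
    and w: "\<omega> \<in> space M" and ab: "-1 \<le> a" "a \<le> b" "b \<le> 1"
  shows "(\<lambda>n. gmx (gpath f W \<omega>) a b n) \<longlonglongrightarrow> gsup f W a b \<omega>"
  unfolding gsup_def by (rule gmx_tendsto[OF ab(2) path_cont[OF f bm w ab(1,3)]])

lemma gsup_meas:
  assumes f: "continuous_on {-1..1} f" and bm: "brownian_motion_on M v (-1) 1 W"
    and ab: "-1 \<le> a" "a \<le> b" "b \<le> 1"
  shows "gsup f W a b \<in> borel_measurable M"
  by (rule borel_measurable_LIMSEQ_metric[OF gmx_meas[OF bm ab] gsup_lim[OF f bm _ ab]])

lemma pair_law_eq:
  assumes bm1: "brownian_motion_on M v (-1) 1 W1" and bm2: "brownian_motion_on M v (-1) 1 W2"
    and S: "S \<in> sets (borel :: (real \<times> real) measure)"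
  shows "measure M {\<omega>\<in>space M. (gmx (gpath f W1 \<omega>) (-1) 0 n, gmx (gpath f W1 \<omega>) 0 1 m) \<in> S}
       = measure M {\<omega>\<in>space M. (gmx (gpath f W2 \<omega>) (-1) 0 n, gmx (gpath f W2 \<omega>) 0 1 m) \<in> S}"
proof -
  have m: "(\<lambda>\<omega>. (gmx (gpath f W \<omega>) (-1) 0 n, gmx (gpath f W \<omega>) 0 1 m)) \<in> borel_measurable M"
    if bm: "brownian_motion_on M v (-1) 1 W" for W
    using gmx_meas[OF bm, of "-1" 0 f n] gmx_meas[OF bm, of 0 1 f m] by (intro borel_measurable_Pair) auto
  have e: "measure M {\<omega>\<in>space M. (gmx (gpath f W \<omega>) (-1) 0 n, gmx (gpath f W \<omega>) 0 1 m) \<in> S}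
     = measure (distr M borel (\<lambda>\<omega>. (gmx (gpath f W \<omega>) (-1) 0 n, gmx (gpath f W \<omega>) 0 1 m))) S"
    if bm: "brownian_motion_on M v (-1) 1 W" for W
    by (subst measure_distr[OF m[OF bm] S]) (auto intro!: arg_cong[where f="measure M"])
  show ?thesis unfolding e[OF bm1] e[OF bm2] key_law[OF bm1] key_law[OF bm2] ..
qed

lemma law_gt:
  assumes f: "continuous_on {-1..1} f"
    and bm1: "brownian_motion_on M v (-1) 1 W1" and bm2: "brownian_motion_on M v (-1) 1 W2"
  shows "measure M {\<omega>\<in>space M. gsup f W1 (-1) 0 \<omega> > gsup f W1 0 1 \<omega>}
       = measure M {\<omega>\<in>space M. gsup f W2 (-1) 0 \<omega> > gsup f W2 0 1 \<omega>}"
proof -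
  have P: "prob_space M" using bmD(1)[OF bm1] .
  have conv: "(\<lambda>n. measure M {\<omega>\<in>space M. gsup f W 0 1 \<omega> \<le> gmx (gpath f W \<omega>) (-1) 0 n - 1 / real (Suc n)})
          \<longlonglongrightarrow> measure M {\<omega>\<in>space M. gsup f W (-1) 0 \<omega> > gsup f W 0 1 \<omega>}"
    if bm: "brownian_motion_on M v (-1) 1 W" for W
    by (rule lim_rep1[OF P gmx_meas[OF bm] gsup_meas[OF f bm] gsup_meas[OF f bm] gmx_incseq gsup_lim[OF f bm]]) auto
  have conv2: "(\<lambda>m. measure M {\<omega>\<in>space M. gmx (gpath f W \<omega>) 0 1 m \<le> gmx (gpath f W \<omega>) (-1) 0 n - 1 / real (Suc n)})
          \<longlonglongrightarrow> measure M {\<omega>\<in>space M. gsup f W 0 1 \<omega> \<le> gmx (gpath f W \<omega>) (-1) 0 n - 1 / real (Suc n)}"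
    if bm: "brownian_motion_on M v (-1) 1 W" for W n
    using gmx_meas[OF bm, of "-1" 0 f n]
    by (intro lim_rep2[OF P gmx_meas[OF bm] gsup_meas[OF f bm] _ gmx_incseq gsup_lim[OF f bm]]) auto
  have eqm: "measure M {\<omega>\<in>space M. gmx (gpath f W1 \<omega>) 0 1 m \<le> gmx (gpath f W1 \<omega>) (-1) 0 n - c}
      = measure M {\<omega>\<in>space M. gmx (gpath f W2 \<omega>) 0 1 m \<le> gmx (gpath f W2 \<omega>) (-1) 0 n - c}" for n m c
  proof -
    have "{p::real\<times>real. snd p \<le> fst p - c} \<in> sets borel"
      by (intro borel_closed closed_Collect_le continuous_intros)
    then show ?thesis using pair_law_eq[OF bm1 bm2, of "{p. snd p \<le> fst p - c}" f n m] by simp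
  qed
  have eqn: "measure M {\<omega>\<in>space M. gsup f W1 0 1 \<omega> \<le> gmx (gpath f W1 \<omega>) (-1) 0 n - 1 / real (Suc n)}
      = measure M {\<omega>\<in>space M. gsup f W2 0 1 \<omega> \<le> gmx (gpath f W2 \<omega>) (-1) 0 n - 1 / real (Suc n)}" for n
    using LIMSEQ_unique[OF conv2[OF bm1, of n] conv2[OF bm2, of n, folded eqm]] .
  show ?thesis using LIMSEQ_unique[OF conv[OF bm1] conv[OF bm2, folded eqn]] .
qed

lemma law_lt:
  assumes f: "continuous_on {-1..1} f"
    and bm1: "brownian_motion_on M v (-1) 1 W1" and bm2: "brownian_motion_on M v (-1) 1 W2"
  shows "measure M {\<omega>\<in>space M. gsup f W1 0 1 \<omega> > gsup f W1 (-1) 0 \<omega>}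
       = measure M {\<omega>\<in>space M. gsup f W2 0 1 \<omega> > gsup f W2 (-1) 0 \<omega>}"
proof -
  have P: "prob_space M" using bmD(1)[OF bm1] .
  have conv: "(\<lambda>n. measure M {\<omega>\<in>space M. gsup f W (-1) 0 \<omega> \<le> gmx (gpath f W \<omega>) 0 1 n - 1 / real (Suc n)})
          \<longlonglongrightarrow> measure M {\<omega>\<in>space M. gsup f W 0 1 \<omega> > gsup f W (-1) 0 \<omega>}"
    if bm: "brownian_motion_on M v (-1) 1 W" for W
    by (rule lim_rep1[OF P gmx_meas[OF bm] gsup_meas[OF f bm] gsup_meas[OF f bm] gmx_incseq gsup_lim[OF f bm]]) auto
  have conv2: "(\<lambda>m. measure M {\<omega>\<in>space M. gmx (gpath f W \<omega>) (-1) 0 m \<le> gmx (gpath f W \<omega>) 0 1 n - 1 / real (Suc n)})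
          \<longlonglongrightarrow> measure M {\<omega>\<in>space M. gsup f W (-1) 0 \<omega> \<le> gmx (gpath f W \<omega>) 0 1 n - 1 / real (Suc n)}"
    if bm: "brownian_motion_on M v (-1) 1 W" for W n
    using gmx_meas[OF bm, of 0 1 f n]
    by (intro lim_rep2[OF P gmx_meas[OF bm] gsup_meas[OF f bm] _ gmx_incseq gsup_lim[OF f bm]]) auto
  have eqm: "measure M {\<omega>\<in>space M. gmx (gpath f W1 \<omega>) (-1) 0 m \<le> gmx (gpath f W1 \<omega>) 0 1 n - c}
      = measure M {\<omega>\<in>space M. gmx (gpath f W2 \<omega>) (-1) 0 m \<le> gmx (gpath f W2 \<omega>) 0 1 n - c}" for n m c
  proof -
    have "{p::real\<times>real. fst p \<le> snd p - c} \<in> sets borel"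
      by (intro borel_closed closed_Collect_le continuous_intros)
    then show ?thesis using pair_law_eq[OF bm1 bm2, of "{p. fst p \<le> snd p - c}" f m n] by simp
  qed
  have eqn: "measure M {\<omega>\<in>space M. gsup f W1 (-1) 0 \<omega> \<le> gmx (gpath f W1 \<omega>) 0 1 n - 1 / real (Suc n)}
      = measure M {\<omega>\<in>space M. gsup f W2 (-1) 0 \<omega> \<le> gmx (gpath f W2 \<omega>) 0 1 n - 1 / real (Suc n)}" for n
    using LIMSEQ_unique[OF conv2[OF bm1, of n] conv2[OF bm2, of n, folded eqm]] .
  show ?thesis using LIMSEQ_unique[OF conv[OF bm1] conv[OF bm2, folded eqn]] .
qed





lemma sup_att:
  fixes g :: "real \<Rightarrow> real"
  assumes "a \<le> b" "continuous_on {a..b} g"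
  shows "\<exists>t\<in>{a..b}. g t = (SUP s\<in>{a..b}. g s)" "\<And>t. t \<in> {a..b} \<Longrightarrow> g t \<le> (SUP s\<in>{a..b}. g s)"
proof -
  obtain t0 where t0: "t0 \<in> {a..b}" "\<And>y. y \<in> {a..b} \<Longrightarrow> g y \<le> g t0"
    using continuous_attains_sup[of "{a..b}" g] assms by auto
  have bdd: "bdd_above (g ` {a..b})"
    by (meson compact_Icc compact_continuous_image compact_imp_bounded bounded_imp_bdd_above assms(2))
  have S: "(SUP s\<in>{a..b}. g s) = g t0"
    using t0 assms by (intro antisym cSUP_least cSUP_upper bdd) auto
  show "\<exists>t\<in>{a..b}. g t = (SUP s\<in>{a..b}. g s)" using t0 S by auto
  show "\<And>t. t \<in> {a..b} \<Longrightarrow> g t \<le> (SUP s\<in>{a..b}. g s)" using t0 S by auto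
qed

lemma cross_left:
  fixes g :: "real \<Rightarrow> real"
  assumes ac: "a < c" and cont: "continuous_on {a..c} g" and ga: "g a \<le> A"
    and gt: "(SUP s\<in>{a..c}. g s) > A"
  shows "\<exists>t. a \<le> t \<and> t < c \<and> g t = A"
proof -
  obtain t1 where t1: "t1 \<in> {a..c}" "g t1 = (SUP s\<in>{a..c}. g s)" using sup_att[of a c g] ac cont by auto
  have "\<exists>t. a \<le> t \<and> t \<le> t1 \<and> g t = A"
    using t1 gt ga by (intro IVT') (auto intro: continuous_on_subset[OF cont])
  then obtain t where t: "a \<le> t" "t \<le> t1" "g t = A" by blast
  have "t \<noteq> t1" using t t1 gt by auto
  thus ?thesis using t t1 by auto
qed

lemma cross_right:
  fixes g :: "real \<Rightarrow> real"
  assumes ca: "c < a" and cont: "continuous_on {c..a} g" and ga: "g a \<le> A"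
    and gt: "(SUP s\<in>{c..a}. g s) > A"
  shows "\<exists>t. c < t \<and> t \<le> a \<and> g t = A"
proof -
  obtain t1 where t1: "t1 \<in> {c..a}" "g t1 = (SUP s\<in>{c..a}. g s)" using sup_att[of c a g] ca cont by auto
  have "\<exists>t. t1 \<le> t \<and> t \<le> a \<and> g t = A"
    using t1 gt ga by (intro IVT2') (auto intro: continuous_on_subset[OF cont])
  then obtain t where t: "t1 \<le> t" "t \<le> a" "g t = A" by blast
  have "t \<noteq> t1" using t t1 gt by auto
  hence "c < t" using t t1 by auto
  thus ?thesis using t by blast
qed

lemma hit_left_iff:
  fixes g :: "real \<Rightarrow> real"
  assumes ac: "a < c" and cont: "continuous_on {a..c} g" and ga: "g a \<le> A"
  shows "(\<exists>t. a \<le> t \<and> t < c \<and> g t = A) \<longleftrightarrow>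
         (\<exists>k::nat. (SUP s\<in>{a..c - (c - a) / (real k + 2)}. g s) \<ge> A)"
proof
  assume "\<exists>t. a \<le> t \<and> t < c \<and> g t = A"
  then obtain t where t: "a \<le> t" "t < c" "g t = A" by blast
  obtain k :: nat where k: "(c - a) / (c - t) < real k" using reals_Archimedean2 by blast
  have "(c - a) / (real k + 2) \<le> c - t"
  proof -
    have "(c - a) < real k * (c - t)" using k t(2) by (simp add: field_simps)
    also have "\<dots> \<le> (real k + 2) * (c - t)" using t(2) by (intro mult_right_mono) auto
    finally show ?thesis by (simp add: field_simps)
  qed
  hence tin: "t \<in> {a..c - (c - a) / (real k + 2)}" using t by auto
  have le: "a \<le> c - (c - a) / (real k + 2)" using tin by auto
  have "g t \<le> (SUP s\<in>{a..c - (c - a) / (real k + 2)}. g s)"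
    by (rule sup_att(2)[OF le continuous_on_subset[OF cont] tin]) (use ac in auto)
  thus "\<exists>k::nat. (SUP s\<in>{a..c - (c - a) / (real k + 2)}. g s) \<ge> A" using t by auto
next
  assume "\<exists>k::nat. (SUP s\<in>{a..c - (c - a) / (real k + 2)}. g s) \<ge> A"
  then obtain k :: nat where k: "(SUP s\<in>{a..c - (c - a) / (real k + 2)}. g s) \<ge> A" by blast
  let ?r = "c - (c - a) / (real k + 2)"
  have pos: "(c - a) / (real k + 2) > 0" using ac by simp
  have le1: "(c - a) / (real k + 2) \<le> c - a" using ac mult_right_mono[of a c "real k"] by (simp add: field_simps)
  have r: "a \<le> ?r" "?r < c" using pos le1 by auto
  obtain t1 where t1: "t1 \<in> {a..?r}" "g t1 = (SUP s\<in>{a..?r}. g s)"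
    using sup_att(1)[OF r(1) continuous_on_subset[OF cont]] r by auto
  have "\<exists>t. a \<le> t \<and> t \<le> t1 \<and> g t = A"
    using t1 k ga r by (intro IVT') (auto intro: continuous_on_subset[OF cont])
  thus "\<exists>t. a \<le> t \<and> t < c \<and> g t = A" using t1 r by force
qed

lemma hit_right_iff:
  fixes g :: "real \<Rightarrow> real"
  assumes ca: "c < a" and cont: "continuous_on {c..a} g" and ga: "g a \<le> A"
  shows "(\<exists>t. c < t \<and> t \<le> a \<and> g t = A) \<longleftrightarrow>
         (\<exists>k::nat. (SUP s\<in>{c + (a - c) / (real k + 2)..a}. g s) \<ge> A)"
proof
  assume "\<exists>t. c < t \<and> t \<le> a \<and> g t = A"
  then obtain t where t: "c < t" "t \<le> a" "g t = A" by blast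
  obtain k :: nat where k: "(a - c) / (t - c) < real k" using reals_Archimedean2 by blast
  have "(a - c) / (real k + 2) \<le> t - c"
  proof -
    have "(a - c) < real k * (t - c)" using k t(1) by (simp add: field_simps)
    also have "\<dots> \<le> (real k + 2) * (t - c)" using t(1) by (intro mult_right_mono) auto
    finally show ?thesis by (simp add: field_simps)
  qed
  hence tin: "t \<in> {c + (a - c) / (real k + 2)..a}" using t by auto
  have le: "c + (a - c) / (real k + 2) \<le> a" using tin by auto
  have "g t \<le> (SUP s\<in>{c + (a - c) / (real k + 2)..a}. g s)"
    by (rule sup_att(2)[OF le continuous_on_subset[OF cont] tin]) (use ca in auto)
  thus "\<exists>k::nat. (SUP s\<in>{c + (a - c) / (real k + 2)..a}. g s) \<ge> A" using t by auto
next
  assume "\<exists>k::nat. (SUP s\<in>{c + (a - c) / (real k + 2)..a}. g s) \<ge> A"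
  then obtain k :: nat where k: "(SUP s\<in>{c + (a - c) / (real k + 2)..a}. g s) \<ge> A" by blast
  let ?r = "c + (a - c) / (real k + 2)"
  have pos: "(a - c) / (real k + 2) > 0" using ca by simp
  have le1: "(a - c) / (real k + 2) \<le> a - c" using ca mult_right_mono[of c a "real k"] by (simp add: field_simps)
  have r: "?r \<le> a" "c < ?r" using pos le1 by auto
  obtain t1 where t1: "t1 \<in> {?r..a}" "g t1 = (SUP s\<in>{?r..a}. g s)"
    using sup_att(1)[OF r(1) continuous_on_subset[OF cont]] r by auto
  have "\<exists>t. t1 \<le> t \<and> t \<le> a \<and> g t = A"
    using t1 k ga r by (intro IVT2') (auto intro: continuous_on_subset[OF cont])
  thus "\<exists>t. c < t \<and> t \<le> a \<and> g t = A" using t1 r by force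
qed




lemma reflM_eq: "reflMinus0 f W \<omega> = gsup f W (-1) 0 \<omega>"
  unfolding reflMinus0_def gsup_def gpath_def by (intro SUP_cong refl) simp

lemma reflP_eq: "reflPlus0 f W \<omega> = gsup f W 0 1 \<omega>"
  unfolding reflPlus0_def gsup_def gpath_def by (intro SUP_cong refl) simp

lemma sm_iff: "sigmaMinus f W \<omega> < 1 \<longleftrightarrow> (\<exists>t. 0 \<le> t \<and> t < 1 \<and> gpath f W \<omega> t = gsup f W (-1) 0 \<omega>)"
  unfolding sigmaMinus_def INF_less_iff reflM_eq gpath_def by auto

lemma sp_iff: "sigmaPlus f W \<omega> > -1 \<longleftrightarrow> (\<exists>t. -1 < t \<and> t \<le> 0 \<and> gpath f W \<omega> t = gsup f W 0 1 \<omega>)"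
proof -
  have m1: "- (1::ereal) = ereal (-1)" by (simp add: one_ereal_def)
  show ?thesis unfolding sigmaPlus_def less_SUP_iff reflP_eq gpath_def m1 less_ereal.simps
    apply (rule iffI)
     apply (elim bexE, rule_tac x=x in exI, simp add: algebra_simps)
    apply (elim exE, rule_tac x=t in bexI, auto simp: algebra_simps)
    done
qed

lemma sandwich:
  assumes f: "continuous_on {-1..1} f" and bm: "brownian_motion_on M v (-1) 1 W"
  shows "{\<omega>\<in>space M. sigmaMinus f W \<omega> < 1} \<in> sets M"
    "{\<omega>\<in>space M. gsup f W 0 1 \<omega> > gsup f W (-1) 0 \<omega>} \<subseteq> {\<omega>\<in>space M. sigmaMinus f W \<omega> < 1}"
    "{\<omega>\<in>space M. sigmaMinus f W \<omega> < 1} \<subseteq> {\<omega>\<in>space M. gsup f W 0 1 \<omega> \<ge> gsup f W (-1) 0 \<omega>}"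
    "{\<omega>\<in>space M. sigmaPlus f W \<omega> > -1} \<in> sets M"
    "{\<omega>\<in>space M. gsup f W (-1) 0 \<omega> > gsup f W 0 1 \<omega>} \<subseteq> {\<omega>\<in>space M. sigmaPlus f W \<omega> > -1}"
    "{\<omega>\<in>space M. sigmaPlus f W \<omega> > -1} \<subseteq> {\<omega>\<in>space M. gsup f W (-1) 0 \<omega> \<ge> gsup f W 0 1 \<omega>}"
proof -
  let ?A = "gsup f W (-1) 0" and ?B = "gsup f W 0 1"
  have cont: "\<And>\<omega> a b. \<omega> \<in> space M \<Longrightarrow> -1 \<le> a \<Longrightarrow> b \<le> 1 \<Longrightarrow> continuous_on {a..b} (gpath f W \<omega>)"
    using path_cont[OF f bm] by blast
  have gA: "gpath f W \<omega> 0 \<le> ?A \<omega>" if "\<omega> \<in> space M" for \<omega>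
    unfolding gsup_def by (rule sup_att(2)[OF _ cont[OF that]]) auto
  have gB: "gpath f W \<omega> 0 \<le> ?B \<omega>" if "\<omega> \<in> space M" for \<omega>
    unfolding gsup_def by (rule sup_att(2)[OF _ cont[OF that]]) auto
  have [measurable]: "?A \<in> borel_measurable M" "?B \<in> borel_measurable M"
    using gsup_meas[OF f bm] by auto
  have rk: "0 \<le> 1 - 1 / (real k + 2)" "-1 \<le> -1 + 1 / (real k + 2)" for k :: nat
    by (simp_all add: field_simps)
  have [measurable]: "gsup f W 0 (1 - 1 / (real k + 2)) \<in> borel_measurable M" for k :: nat
    using rk[of k] by (intro gsup_meas[OF f bm]) auto
  have [measurable]: "gsup f W (-1 + 1 / (real k + 2)) 0 \<in> borel_measurable M" for k :: nat
    using rk[of k] by (intro gsup_meas[OF f bm]) (auto simp: field_simps)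
  have smE: "{\<omega>\<in>space M. sigmaMinus f W \<omega> < 1} = {\<omega>\<in>space M. \<exists>k::nat. gsup f W 0 (1 - 1 / (real k + 2)) \<omega> \<ge> ?A \<omega>}"
  proof (rule Collect_cong, rule conj_cong[OF refl])
    fix \<omega> assume w: "\<omega> \<in> space M"
    show "sigmaMinus f W \<omega> < 1 \<longleftrightarrow> (\<exists>k::nat. gsup f W 0 (1 - 1 / (real k + 2)) \<omega> \<ge> ?A \<omega>)"
      unfolding sm_iff using hit_left_iff[of 0 1 "gpath f W \<omega>" "?A \<omega>"] cont[OF w] gA[OF w]
      by (simp add: gsup_def)
  qed
  show "{\<omega>\<in>space M. sigmaMinus f W \<omega> < 1} \<in> sets M" unfolding smE by measurable
  have spE: "{\<omega>\<in>space M. sigmaPlus f W \<omega> > -1} = {\<omega>\<in>space M. \<exists>k::nat. gsup f W (-1 + 1 / (real k + 2)) 0 \<omega> \<ge> ?B \<omega>}"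
  proof (rule Collect_cong, rule conj_cong[OF refl])
    fix \<omega> assume w: "\<omega> \<in> space M"
    show "sigmaPlus f W \<omega> > -1 \<longleftrightarrow> (\<exists>k::nat. gsup f W (-1 + 1 / (real k + 2)) 0 \<omega> \<ge> ?B \<omega>)"
      unfolding sp_iff using hit_right_iff[of "-1" 0 "gpath f W \<omega>" "?B \<omega>"] cont[OF w] gB[OF w]
      by (simp add: gsup_def)
  qed
  show "{\<omega>\<in>space M. sigmaPlus f W \<omega> > -1} \<in> sets M" unfolding spE by measurable
  show "{\<omega>\<in>space M. ?B \<omega> > ?A \<omega>} \<subseteq> {\<omega>\<in>space M. sigmaMinus f W \<omega> < 1}"
  proof safe
    fix \<omega> assume w: "\<omega> \<in> space M" "?B \<omega> > ?A \<omega>"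
    show "sigmaMinus f W \<omega> < 1" unfolding sm_iff
      using cross_left[of 0 1 "gpath f W \<omega>" "?A \<omega>"] cont[OF w(1)] gA[OF w(1)] w(2) by (auto simp: gsup_def)
  qed
  show "{\<omega>\<in>space M. ?A \<omega> > ?B \<omega>} \<subseteq> {\<omega>\<in>space M. sigmaPlus f W \<omega> > -1}"
  proof safe
    fix \<omega> assume w: "\<omega> \<in> space M" "?A \<omega> > ?B \<omega>"
    show "sigmaPlus f W \<omega> > -1" unfolding sp_iff
      using cross_right[of "-1" 0 "gpath f W \<omega>" "?B \<omega>"] cont[OF w(1)] gB[OF w(1)] w(2) by (auto simp: gsup_def)
  qed
  show "{\<omega>\<in>space M. sigmaMinus f W \<omega> < 1} \<subseteq> {\<omega>\<in>space M. ?B \<omega> \<ge> ?A \<omega>}"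
  proof safe
    fix \<omega> assume w: "\<omega> \<in> space M" "sigmaMinus f W \<omega> < 1"
    then obtain t where t: "0 \<le> t" "t < 1" "gpath f W \<omega> t = ?A \<omega>" unfolding sm_iff by blast
    have "gpath f W \<omega> t \<le> ?B \<omega>" unfolding gsup_def by (rule sup_att(2)[OF _ cont[OF w(1)]]) (use t in auto)
    thus "?B \<omega> \<ge> ?A \<omega>" using t by simp
  qed
  show "{\<omega>\<in>space M. sigmaPlus f W \<omega> > -1} \<subseteq> {\<omega>\<in>space M. ?A \<omega> \<ge> ?B \<omega>}"
  proof safe
    fix \<omega> assume w: "\<omega> \<in> space M" "sigmaPlus f W \<omega> > -1"
    then obtain t where t: "-1 < t" "t \<le> 0" "gpath f W \<omega> t = ?B \<omega>" unfolding sp_iff by blast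
    have "gpath f W \<omega> t \<le> ?A \<omega>" unfolding gsup_def by (rule sup_att(2)[OF _ cont[OF w(1)]]) (use t in auto)
    thus "?A \<omega> \<ge> ?B \<omega>" using t by simp
  qed
qed




lemma normal_density_le: "\<sigma> > 0 \<Longrightarrow> normal_density 0 \<sigma> x \<le> 1 / sqrt (2 * pi * \<sigma>\<^sup>2)"
  unfolding normal_density_def
  by (intro mult_left_le) (auto simp: exp_le_one_iff)

lemma small_ball:
  fixes U Z :: "'a \<Rightarrow> real"
  assumes P: "prob_space M" and ind: "prob_space.indep_var M borel U borel Z"
    and Zd: "distr M borel Z = density lborel (\<lambda>x. ennreal (normal_density 0 \<sigma> x))"
    and s: "\<sigma> > 0" and e: "\<epsilon> \<ge> 0"
  shows "measure M {\<omega>\<in>space M. \<bar>U \<omega> - Z \<omega>\<bar> \<le> \<epsilon>} \<le> 2 * \<epsilon> * (1 / sqrt (2 * pi * \<sigma>\<^sup>2))"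
proof -
  interpret prob_space M by (rule P)
  let ?C = "1 / sqrt (2 * pi * \<sigma>\<^sup>2)"
  have C0: "?C \<ge> 0" by simp
  have rvU: "U \<in> borel_measurable M" using indep_var_rv1[OF ind] .
  have rvZ: "Z \<in> borel_measurable M" using indep_var_rv2[OF ind] .
  let ?S = "{p::real\<times>real. \<bar>fst p - snd p\<bar> \<le> \<epsilon>}"
  have Sb: "?S \<in> sets (borel \<Otimes>\<^sub>M borel)"
  proof -
    have "?S \<in> sets borel" by (intro borel_closed closed_Collect_le continuous_intros)
    thus ?thesis unfolding borel_prod .
  qed
  interpret PU: prob_space "distr M borel U" by (rule prob_space_distr[OF rvU])
  interpret PZ: prob_space "distr M borel Z" by (rule prob_space_distr[OF rvZ])
  have "emeasure M {\<omega>\<in>space M. \<bar>U \<omega> - Z \<omega>\<bar> \<le> \<epsilon>} = emeasure (distr M (borel \<Otimes>\<^sub>M borel) (\<lambda>\<omega>. (U \<omega>, Z \<omega>))) ?S"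
    using Sb rvU rvZ by (subst emeasure_distr) (auto intro!: arg_cong[where f="emeasure M"])
  also have "\<dots> = emeasure (distr M borel U \<Otimes>\<^sub>M distr M borel Z) ?S"
    using ind unfolding indep_var_distribution_eq by simp
  also have "\<dots> = (\<integral>\<^sup>+x. emeasure (distr M borel Z) (Pair x -` ?S) \<partial>distr M borel U)"
    using Sb by (subst PZ.emeasure_pair_measure_alt) auto
  also have "\<dots> \<le> (\<integral>\<^sup>+x. ennreal (2 * \<epsilon> * ?C) \<partial>distr M borel U)"
  proof (rule nn_integral_mono)
    fix x :: real
    have eqS: "Pair x -` ?S = {x - \<epsilon> .. x + \<epsilon>}" by auto
    have "emeasure (distr M borel Z) (Pair x -` ?S) = (\<integral>\<^sup>+y. ennreal (normal_density 0 \<sigma> y) * indicator {x - \<epsilon> .. x + \<epsilon>} y \<partial>lborel)"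
      unfolding eqS Zd by (subst emeasure_density) auto
    also have "\<dots> \<le> (\<integral>\<^sup>+y. ennreal ?C * indicator {x - \<epsilon> .. x + \<epsilon>} y \<partial>lborel)"
      using normal_density_le[OF s] by (intro nn_integral_mono mult_right_mono) (auto intro: ennreal_leI)
    also have "\<dots> = ennreal ?C * emeasure lborel {x - \<epsilon> .. x + \<epsilon>}"
      by (rule nn_integral_cmult_indicator) auto
    also have "\<dots> = ennreal (2 * \<epsilon> * ?C)"
      using e C0 by (simp add: ennreal_mult[symmetric] mult_ac)
    finally show "emeasure (distr M borel Z) (Pair x -` ?S) \<le> ennreal (2 * \<epsilon> * ?C)" .
  qed
  also have "\<dots> = ennreal (2 * \<epsilon> * ?C)"
    using PU.emeasure_space_1 by simp
  finally have "emeasure M {\<omega>\<in>space M. \<bar>U \<omega> - Z \<omega>\<bar> \<le> \<epsilon>} \<le> ennreal (2 * \<epsilon> * ?C)" .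
  thus ?thesis using e C0 by (simp add: emeasure_eq_measure ennreal_le_iff)
qed

lemma bm_indep:
  assumes bm: "brownian_motion_on M v (-1) 1 W"
    and h: "\<And>i. i < L \<Longrightarrow> h i \<in> {-1..1}" "\<And>i. Suc i < L \<Longrightarrow> h i < h (Suc i)"
  shows "prob_space.indep_vars M (\<lambda>_. borel) (\<lambda>i \<omega>. W (h (Suc i)) \<omega> - W (h i) \<omega>) {..<L - 1}"
proof -
  interpret prob_space M using bmD(1)[OF bm] .
  define ts where "ts = map h [0..<L]"
  have len: "length ts = L" by (simp add: ts_def)
  have nth: "\<And>i. i < L \<Longrightarrow> ts ! i = h i" by (simp add: ts_def)
  have sorted: "sorted ts" unfolding sorted_iff_nth_Suc len
    using h(2) nth by (metis Suc_lessD less_imp_le)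
  have set: "set ts \<subseteq> {-1..1}" using h(1) by (auto simp: ts_def)
  have ind0: "indep_vars (\<lambda>_. borel) (\<lambda>i \<omega>. W (ts ! Suc i) \<omega> - W (ts ! i) \<omega>) {..<length ts - 1}"
    using bmD(5)[OF bm sorted set] .
  show ?thesis
    using ind0 unfolding len by (rule indep_vars_cong[THEN iffD1, rotated -1]) (auto simp: nth)
qed

definition tieh :: "real \<Rightarrow> nat \<Rightarrow> nat \<Rightarrow> real" where
  "tieh d n = cat2 (2^n) (gr (-1) 0 n) (gr d 1 n)"

lemma tieh_range: "0 < d \<Longrightarrow> d < 1 \<Longrightarrow> j < 2^n + 2^n + 2 \<Longrightarrow> tieh d n j \<in> {-1..1}"
proof -
  assume d: "0 < d" "d < 1" and j: "j < 2^n + 2^n + 2"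
  show ?thesis
  proof (cases "j \<le> 2^n")
    case True thus ?thesis using gr_in[of "-1" 0 j n] by (auto simp: tieh_def cat2_def)
  next
    case False
    hence "j - Suc (2^n) \<le> 2^n" using j by auto
    thus ?thesis using False gr_in[of d 1 "j - Suc (2^n)" n] d by (auto simp: tieh_def cat2_def)
  qed
qed

lemma tieh_mono: "0 < d \<Longrightarrow> d < 1 \<Longrightarrow> tieh d n j < tieh d n (Suc j)"
proof -
  assume d: "0 < d" "d < 1"
  consider "Suc j \<le> 2^n" | "j = 2^n" | "j > 2^n" by linarith
  thus ?thesis
  proof cases
    case 1 thus ?thesis by (auto simp: tieh_def cat2_def intro!: gr_strict)
  next
    case 2 thus ?thesis using d by (auto simp: tieh_def cat2_def gr_last gr_first)
  next
    case 3
    hence "Suc j - Suc (2^n) = Suc (j - Suc (2^n))" by auto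
    thus ?thesis using 3 d by (auto simp: tieh_def cat2_def intro!: gr_strict)
  qed
qed

lemma tieh_left: "j \<le> 2^n \<Longrightarrow> tieh d n j = gr (-1) 0 n j"
  by (simp add: tieh_def cat2_def)

lemma tieh_right: "tieh d n (Suc (2^n) + k) = gr d 1 n k"
  by (simp add: tieh_def cat2_def)

definition tiePsi :: "(real \<Rightarrow> real) \<Rightarrow> real \<Rightarrow> nat \<Rightarrow> (nat \<Rightarrow> real) \<Rightarrow> real" where
  "tiePsi f d n x =
     Max ((\<lambda>k. f (gr d 1 n k) - (\<Sum>i\<in>{Suc (2^n)..<Suc (2^n) + k}. x i)) ` {..2^n})
   - Max ((\<lambda>j. f (gr (-1) 0 n j) + (\<Sum>i\<in>{j..<2^n}. x i)) ` {..2^n})"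

lemma tie_indep:
  assumes bm: "brownian_motion_on M v (-1) 1 W" and d: "0 < d" "d < 1"
  shows "prob_space.indep_var M borel
     (\<lambda>\<omega>. gmx (\<lambda>t. f t - (W t \<omega> - W d \<omega>)) d 1 n - gmx (gpath f W \<omega>) (-1) 0 n)
     borel (\<lambda>\<omega>. W d \<omega> - W 0 \<omega>)"
proof -
  interpret prob_space M using bmD(1)[OF bm] .
  let ?L = "2^n + 2^n + 2 :: nat"
  let ?h = "tieh d n"
  let ?k0 = "2^n :: nat"
  let ?X = "\<lambda>i \<omega>. W (?h (Suc i)) \<omega> - W (?h i) \<omega>"
  let ?B = "{..<?L - 1} - {?k0}"
  have ind: "indep_vars (\<lambda>_. borel) ?X {..<?L - 1}"
    by (rule bm_indep[OF bm]) (use tieh_range[OF d] tieh_mono[OF d] in auto)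
  have ind2: "indep_var (PiM ?B (\<lambda>_. borel)) (\<lambda>\<omega>. restrict (\<lambda>i. ?X i \<omega>) ?B)
                        (PiM {?k0} (\<lambda>_. borel)) (\<lambda>\<omega>. restrict (\<lambda>i. ?X i \<omega>) {?k0})"
    by (rule indep_var_restrict[OF ind]) auto
  have mPsi: "tiePsi f d n \<in> borel_measurable (PiM ?B (\<lambda>_. borel))"
    unfolding tiePsi_def
    apply (intro borel_measurable_diff borel_measurable_Max borel_measurable_add borel_measurable_const
       borel_measurable_sum finite_atMost)
     apply (rule measurable_component_singleton, force)
    apply (rule measurable_component_singleton, force)
    done
  have mk: "(\<lambda>x. x ?k0) \<in> borel_measurable (PiM {?k0} (\<lambda>_. (borel :: real measure)))"
    by (rule measurable_component_singleton) simp
  note ind3 = indep_var_compose[OF ind2 mPsi mk]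
  have e1: "(tiePsi f d n \<circ> (\<lambda>\<omega>. restrict (\<lambda>i. ?X i \<omega>) ?B))
     = (\<lambda>\<omega>. gmx (\<lambda>t. f t - (W t \<omega> - W d \<omega>)) d 1 n - gmx (gpath f W \<omega>) (-1) 0 n)"
  proof
    fix \<omega>
    have s1: "(\<Sum>i\<in>{Suc ?k0..<Suc ?k0 + k}. restrict (\<lambda>i. ?X i \<omega>) ?B i) = W (gr d 1 n k) \<omega> - W d \<omega>"
      if "k \<le> 2^n" for k
    proof -
      have "(\<Sum>i\<in>{Suc ?k0..<Suc ?k0 + k}. restrict (\<lambda>i. ?X i \<omega>) ?B i) = (\<Sum>i\<in>{Suc ?k0..<Suc ?k0 + k}. ?X i \<omega>)"
        using that by (intro sum.cong) auto
      also have "\<dots> = W (?h (Suc ?k0 + k)) \<omega> - W (?h (Suc ?k0)) \<omega>"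
        by (rule sum_Suc_diff'[of "Suc ?k0" "Suc ?k0 + k" "\<lambda>i. W (?h i) \<omega>"]) simp
      also have "\<dots> = W (gr d 1 n k) \<omega> - W d \<omega>"
        using tieh_right[of d n k] tieh_right[of d n 0] by (simp add: gr_first)
      finally show ?thesis .
    qed
    have s2: "(\<Sum>i\<in>{j..<?k0}. restrict (\<lambda>i. ?X i \<omega>) ?B i) = W 0 \<omega> - W (gr (-1) 0 n j) \<omega>"
      if "j \<le> 2^n" for j
    proof -
      have "(\<Sum>i\<in>{j..<?k0}. restrict (\<lambda>i. ?X i \<omega>) ?B i) = (\<Sum>i\<in>{j..<?k0}. ?X i \<omega>)"
        by (intro sum.cong) auto
      also have "\<dots> = W (?h ?k0) \<omega> - W (?h j) \<omega>"
        by (rule sum_Suc_diff'[of j ?k0 "\<lambda>i. W (?h i) \<omega>"]) (use that in simp)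
      also have "\<dots> = W 0 \<omega> - W (gr (-1) 0 n j) \<omega>"
        using that by (simp add: tieh_left gr_last)
      finally show ?thesis .
    qed
    have i1: "(\<lambda>k. f (gr d 1 n k) - (\<Sum>i\<in>{Suc ?k0..<Suc ?k0 + k}. restrict (\<lambda>i. ?X i \<omega>) ?B i)) ` {..2^n}
         = (\<lambda>k. f (gr d 1 n k) - (W (gr d 1 n k) \<omega> - W d \<omega>)) ` {..2^n}"
    proof (intro image_cong refl)
      fix k :: nat assume "k \<in> {..2^n}"
      then have k: "k \<le> 2^n" by simp
      show "f (gr d 1 n k) - (\<Sum>i\<in>{Suc ?k0..<Suc ?k0 + k}. restrict (\<lambda>i. ?X i \<omega>) ?B i)
         = f (gr d 1 n k) - (W (gr d 1 n k) \<omega> - W d \<omega>)" unfolding s1[OF k] ..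
    qed
    have i2: "(\<lambda>j. f (gr (-1) 0 n j) + (\<Sum>i\<in>{j..<?k0}. restrict (\<lambda>i. ?X i \<omega>) ?B i)) ` {..2^n}
         = (\<lambda>j. gpath f W \<omega> (gr (-1) 0 n j)) ` {..2^n}"
    proof (intro image_cong refl)
      fix j :: nat assume "j \<in> {..2^n}"
      then have j: "j \<le> 2^n" by simp
      show "f (gr (-1) 0 n j) + (\<Sum>i\<in>{j..<?k0}. restrict (\<lambda>i. ?X i \<omega>) ?B i)
         = gpath f W \<omega> (gr (-1) 0 n j)" unfolding s2[OF j] gpath_def by simp
    qed
    show "(tiePsi f d n \<circ> (\<lambda>\<omega>. restrict (\<lambda>i. ?X i \<omega>) ?B)) \<omega>
       = gmx (\<lambda>t. f t - (W t \<omega> - W d \<omega>)) d 1 n - gmx (gpath f W \<omega>) (-1) 0 n"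
      unfolding comp_def tiePsi_def gmx_def i1 i2 ..
  qed
  have e2: "((\<lambda>x. x ?k0) \<circ> (\<lambda>\<omega>. restrict (\<lambda>i. ?X i \<omega>) {?k0})) = (\<lambda>\<omega>. W d \<omega> - W 0 \<omega>)"
    using tieh_right[of d n 0] tieh_left[of "2^n" n d] by (auto simp: gr_first gr_last)
  show ?thesis using ind3 unfolding e1 e2 .
qed

lemma gmx_shift:
  "gmx (gpath f W \<omega>) d 1 n = gmx (\<lambda>t. f t - (W t \<omega> - W d \<omega>)) d 1 n - (W d \<omega> - W 0 \<omega>)"
proof -
  have "Max ((\<lambda>j. gpath f W \<omega> (gr d 1 n j)) ` {..2^n})
      = Max ((\<lambda>j. (f (gr d 1 n j) - (W (gr d 1 n j) \<omega> - W d \<omega>)) + (- (W d \<omega> - W 0 \<omega>))) ` {..2^n})"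
    by (intro arg_cong[where f=Max] image_cong refl) (simp add: gpath_def)
  also have "\<dots> = Max ((\<lambda>j. f (gr d 1 n j) - (W (gr d 1 n j) \<omega> - W d \<omega>)) ` {..2^n}) + (- (W d \<omega> - W 0 \<omega>))"
    by (rule Max_add_commute) auto
  finally show ?thesis unfolding gmx_def by simp
qed

lemma tie_part:
  assumes f: "continuous_on {-1..1} f" and bm: "brownian_motion_on M v (-1) 1 W" and v: "v > 0"
    and d: "0 < d" "d < 1"
  shows "measure M {\<omega>\<in>space M. gsup f W d 1 \<omega> = gsup f W (-1) 0 \<omega>} = 0"
proof -
  interpret prob_space M using bmD(1)[OF bm] .
  define \<sigma> where "\<sigma> = sqrt (v * (d - 0))"
  have s: "\<sigma> > 0" using v d by (simp add: \<sigma>_def)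
  define C where "C = 1 / sqrt (2 * pi * \<sigma>\<^sup>2)"
  have C: "C > 0" using s by (simp add: C_def)
  have Zd: "distr M borel (\<lambda>\<omega>. W d \<omega> - W 0 \<omega>) = density lborel (\<lambda>x. ennreal (normal_density 0 \<sigma> x))"
  proof -
    have "distr M borel (\<lambda>\<omega>. W d \<omega> - W 0 \<omega>) = distr M lborel (\<lambda>\<omega>. W d \<omega> - W 0 \<omega>)"
      by (rule distr_cong) auto
    also have "\<dots> = density lborel (\<lambda>x. ennreal (normal_density 0 \<sigma> x))"
      using bmD(4)[OF bm, of 0 d] d unfolding distributed_def \<sigma>_def by auto
    finally show ?thesis .
  qed
  have [measurable]: "(\<lambda>\<omega>. gmx (gpath f W \<omega>) d 1 n) \<in> borel_measurable M"
    "(\<lambda>\<omega>. gmx (gpath f W \<omega>) (-1) 0 n) \<in> borel_measurable M" for n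
    using d by (auto intro!: gmx_meas[OF bm])
  have E: "measure M {\<omega>\<in>space M. \<bar>gmx (gpath f W \<omega>) d 1 n - gmx (gpath f W \<omega>) (-1) 0 n\<bar> \<le> \<epsilon>} \<le> 2 * \<epsilon> * C"
    if e: "\<epsilon> \<ge> 0" for \<epsilon> n
  proof -
    have "{\<omega>\<in>space M. \<bar>gmx (gpath f W \<omega>) d 1 n - gmx (gpath f W \<omega>) (-1) 0 n\<bar> \<le> \<epsilon>}
      = {\<omega>\<in>space M. \<bar>(gmx (\<lambda>t. f t - (W t \<omega> - W d \<omega>)) d 1 n - gmx (gpath f W \<omega>) (-1) 0 n) - (W d \<omega> - W 0 \<omega>)\<bar> \<le> \<epsilon>}"
      by (simp add: gmx_shift algebra_simps)
    also have "measure M \<dots> \<le> 2 * \<epsilon> * C"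
      unfolding C_def by (rule small_ball[OF prob_space_axioms tie_indep[OF bm d] Zd s e])
    finally show ?thesis .
  qed
  let ?D = "\<lambda>n \<omega>. gmx (gpath f W \<omega>) d 1 n - gmx (gpath f W \<omega>) (-1) 0 n"
  let ?T = "{\<omega>\<in>space M. gsup f W d 1 \<omega> = gsup f W (-1) 0 \<omega>}"
  have [measurable]: "gsup f W d 1 \<in> borel_measurable M" "gsup f W (-1) 0 \<in> borel_measurable M"
    using d by (auto intro!: gsup_meas[OF f bm])
  have bound: "measure M ?T \<le> 2 * \<epsilon> * C" if e: "\<epsilon> > 0" for \<epsilon>
  proof -
    define G where "G N = {\<omega>\<in>space M. \<forall>m\<ge>N. \<bar>?D m \<omega>\<bar> \<le> \<epsilon>}" for N
    have Gm: "G N \<in> sets M" for N unfolding G_def by measurable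
    have Ginc: "incseq G" unfolding G_def by (rule incseq_SucI) auto
    have GE: "measure M (G N) \<le> 2 * \<epsilon> * C" for N
    proof -
      have "measure M (G N) \<le> measure M {\<omega>\<in>space M. \<bar>?D N \<omega>\<bar> \<le> \<epsilon>}"
        by (rule finite_measure_mono) (auto simp: G_def)
      also have "\<dots> \<le> 2 * \<epsilon> * C" using E[of \<epsilon> N] e by simp
      finally show ?thesis .
    qed
    have lim: "(\<lambda>N. measure M (G N)) \<longlonglongrightarrow> measure M (\<Union>N. G N)"
      by (rule finite_Lim_measure_incseq) (use Gm Ginc in auto)
    have U: "measure M (\<Union>N. G N) \<le> 2 * \<epsilon> * C"
      by (rule LIMSEQ_le_const2[OF lim]) (use GE in auto)
    have sub: "?T \<subseteq> (\<Union>N. G N)"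
    proof
      fix \<omega> assume w: "\<omega> \<in> ?T"
      hence ws: "\<omega> \<in> space M" by simp
      have "(\<lambda>n. ?D n \<omega>) \<longlonglongrightarrow> gsup f W d 1 \<omega> - gsup f W (-1) 0 \<omega>"
        by (intro tendsto_diff gsup_lim[OF f bm ws]) (use d in auto)
      hence "(\<lambda>n. ?D n \<omega>) \<longlonglongrightarrow> 0" using w by simp
      hence "eventually (\<lambda>n. dist (?D n \<omega>) 0 < \<epsilon>) sequentially" using e by (rule tendstoD)
      then obtain N where N: "\<And>m. m \<ge> N \<Longrightarrow> dist (?D m \<omega>) 0 < \<epsilon>" by (auto simp: eventually_sequentially)
      hence "\<omega> \<in> G N" using ws unfolding G_def by (auto simp: dist_real_def less_imp_le)
      thus "\<omega> \<in> (\<Union>N. G N)" by blast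
    qed
    have "measure M ?T \<le> measure M (\<Union>N. G N)"
      by (rule finite_measure_mono[OF sub]) (use Gm in auto)
    thus ?thesis using U by linarith
  qed
  have "measure M ?T \<le> 0"
  proof (rule field_le_epsilon)
    fix e :: real assume e: "0 < e"
    have "measure M ?T \<le> 2 * (e / (2 * C)) * C" using bound[of "e / (2 * C)"] e C by simp
    also have "\<dots> = e" using C by simp
    finally show "measure M ?T \<le> 0 + e" by simp
  qed
  thus ?thesis using measure_nonneg[of M ?T] by linarith
qed

lemma gsup_mono_sub:
  assumes f: "continuous_on {-1..1} f" and bm: "brownian_motion_on M v (-1) 1 W" and w: "\<omega> \<in> space M"
    and "-1 \<le> a" "a \<le> a'" "a' \<le> b'" "b' \<le> b" "b \<le> 1"
  shows "gsup f W a' b' \<omega> \<le> gsup f W a b \<omega>"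
proof -
  obtain t where t: "t \<in> {a'..b'}" "gpath f W \<omega> t = gsup f W a' b' \<omega>"
    using sup_att(1)[OF _ path_cont[OF f bm w]] assms unfolding gsup_def by (metis order_trans)
  have "gpath f W \<omega> t \<le> gsup f W a b \<omega>" unfolding gsup_def
    by (rule sup_att(2)[OF _ path_cont[OF f bm w]]) (use assms t in auto)
  thus ?thesis using t by simp
qed

lemma tie:
  assumes f: "continuous_on {-1..1} f" and bm: "brownian_motion_on M v (-1) 1 W" and v: "v > 0"
    and hyp: "measure M {\<omega>\<in>space M. reflMinus0 f W \<omega> > f 0} = 1"
  shows "measure M {\<omega>\<in>space M. gsup f W (-1) 0 \<omega> = gsup f W 0 1 \<omega>} = 0"
proof -
  interpret prob_space M using bmD(1)[OF bm] .
  let ?A = "gsup f W (-1) 0" and ?B = "gsup f W 0 1"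
  define dk where "dk k = 1 / (real k + 2)" for k :: nat
  have dk: "0 < dk k" "dk k < 1" "dk (Suc k) \<le> dk k" for k by (auto simp: dk_def field_simps)
  have [measurable]: "?A \<in> borel_measurable M" "?B \<in> borel_measurable M"
    "gsup f W 0 (dk k) \<in> borel_measurable M" "gsup f W (dk k) 1 \<in> borel_measurable M" for k
    using dk[of k] by (auto intro!: gsup_meas[OF f bm])
  define E where "E k = {\<omega>\<in>space M. gsup f W 0 (dk k) \<omega> \<ge> ?A \<omega>}" for k
  have Em: "E k \<in> sets M" for k unfolding E_def by measurable
  have cont: "\<And>\<omega>. \<omega> \<in> space M \<Longrightarrow> continuous_on {-1..1} (gpath f W \<omega>)"
    using path_cont[OF f bm] by auto
  have step: "measure M {\<omega>\<in>space M. ?A \<omega> = ?B \<omega>} \<le> measure M (E k)" for k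
  proof -
    have sub: "{\<omega>\<in>space M. ?A \<omega> = ?B \<omega>} \<subseteq> E k \<union> {\<omega>\<in>space M. gsup f W (dk k) 1 \<omega> = ?A \<omega>}"
    proof safe
      fix \<omega> assume w: "\<omega> \<in> space M" "?A \<omega> = ?B \<omega>" "\<omega> \<notin> E k"
      obtain t where t: "t \<in> {0..1}" "gpath f W \<omega> t = ?B \<omega>"
        using sup_att(1)[OF _ path_cont[OF f bm w(1)], of 0 1] unfolding gsup_def by auto
      show "gsup f W (dk k) 1 \<omega> = ?A \<omega>"
      proof (cases "t \<le> dk k")
        case True
        have "gpath f W \<omega> t \<le> gsup f W 0 (dk k) \<omega>" unfolding gsup_def
          by (rule sup_att(2)[OF _ path_cont[OF f bm w(1)]]) (use t True dk[of k] in auto)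
        hence "\<omega> \<in> E k" using t w unfolding E_def by auto
        thus ?thesis using w by simp
      next
        case False
        have "gpath f W \<omega> t \<le> gsup f W (dk k) 1 \<omega>" unfolding gsup_def
          by (rule sup_att(2)[OF _ path_cont[OF f bm w(1)]]) (use t False dk[of k] in auto)
        moreover have "gsup f W (dk k) 1 \<omega> \<le> ?B \<omega>"
          by (rule gsup_mono_sub[OF f bm w(1)]) (use dk[of k] in auto)
        ultimately show ?thesis using t w by simp
      qed
    qed
    have "measure M {\<omega>\<in>space M. ?A \<omega> = ?B \<omega>} \<le> measure M (E k \<union> {\<omega>\<in>space M. gsup f W (dk k) 1 \<omega> = ?A \<omega>})"
      by (rule finite_measure_mono[OF sub]) (use Em in measurable)
    also have "\<dots> \<le> measure M (E k) + measure M {\<omega>\<in>space M. gsup f W (dk k) 1 \<omega> = ?A \<omega>}"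
      by (rule measure_Un_le) (use Em in measurable)
    also have "measure M {\<omega>\<in>space M. gsup f W (dk k) 1 \<omega> = ?A \<omega>} = 0"
      by (rule tie_part[OF f bm v dk(1,2)])
    finally show ?thesis by simp
  qed
  have dec: "decseq E" unfolding E_def
  proof (rule decseq_SucI, safe)
    fix k \<omega> assume w: "\<omega> \<in> space M" "?A \<omega> \<le> gsup f W 0 (dk (Suc k)) \<omega>"
    have "gsup f W 0 (dk (Suc k)) \<omega> \<le> gsup f W 0 (dk k) \<omega>"
      by (rule gsup_mono_sub[OF f bm w(1)]) (use dk[of k] dk[of "Suc k"] in auto)
    thus "?A \<omega> \<le> gsup f W 0 (dk k) \<omega>" using w by simp
  qed
  have lim: "(\<lambda>k. measure M (E k)) \<longlonglongrightarrow> measure M (\<Inter>k. E k)"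
    by (rule finite_Lim_measure_decseq) (use Em dec in auto)
  have inter: "(\<Inter>k. E k) \<subseteq> {\<omega>\<in>space M. ?A \<omega> \<le> f 0}"
  proof
    fix \<omega> assume w: "\<omega> \<in> (\<Inter>k. E k)"
    hence ws: "\<omega> \<in> space M" unfolding E_def by auto
    show "\<omega> \<in> {\<omega>\<in>space M. ?A \<omega> \<le> f 0}"
    proof (rule ccontr)
      assume "\<omega> \<notin> {\<omega>\<in>space M. ?A \<omega> \<le> f 0}"
      hence gt: "?A \<omega> > f 0" using ws by auto
      have g0: "gpath f W \<omega> 0 = f 0" by (simp add: gpath_def)
      obtain \<delta> where \<delta>: "\<delta> > 0" "\<And>t. t \<in> {-1..1} \<Longrightarrow> dist t 0 < \<delta> \<Longrightarrow> dist (gpath f W \<omega> t) (gpath f W \<omega> 0) < ?A \<omega> - f 0"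
        using cont[OF ws] gt unfolding continuous_on_iff by (metis atLeastAtMost_iff diff_gt_0_iff_gt neg_le_0_iff_le zero_less_one_class.zero_le_one)
      obtain k :: nat where k: "1 / \<delta> < real k" using reals_Archimedean2 by blast
      have dkd: "dk k < \<delta>"
      proof -
        have "1 < real k * \<delta>" using k \<delta>(1) by (simp add: field_simps)
        also have "\<dots> < (real k + 2) * \<delta>" using \<delta>(1) by (simp add: field_simps)
        finally show ?thesis using \<delta>(1) by (simp add: dk_def field_simps)
      qed
      obtain t where t: "t \<in> {0..dk k}" "gpath f W \<omega> t = gsup f W 0 (dk k) \<omega>"
        using sup_att(1)[OF _ path_cont[OF f bm ws], of 0 "dk k"] dk[of k] unfolding gsup_def by auto
      have "dist (gpath f W \<omega> t) (gpath f W \<omega> 0) < ?A \<omega> - f 0"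
        using t dk[of k] dkd by (intro \<delta>(2)) (auto simp: dist_real_def)
      hence "gsup f W 0 (dk k) \<omega> < ?A \<omega>" using t g0 by (auto simp: dist_real_def)
      moreover have "\<omega> \<in> E k" using w by auto
      ultimately show False unfolding E_def by auto
    qed
  qed
  have z: "measure M {\<omega>\<in>space M. ?A \<omega> \<le> f 0} = 0"
  proof -
    have "{\<omega>\<in>space M. ?A \<omega> \<le> f 0} = space M - {\<omega>\<in>space M. reflMinus0 f W \<omega> > f 0}"
      by (auto simp: reflM_eq)
    moreover have "{\<omega>\<in>space M. reflMinus0 f W \<omega> > f 0} \<in> events"
      unfolding reflM_eq by measurable
    ultimately show ?thesis using hyp by (simp add: prob_compl)
  qed
  have "measure M (\<Inter>k. E k) \<le> 0"
    using finite_measure_mono[OF inter] z by simp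
  hence "measure M {\<omega>\<in>space M. ?A \<omega> = ?B \<omega>} \<le> 0"
    using LIMSEQ_le_const[OF lim] step by (meson LIMSEQ_le_const order_trans)
  thus ?thesis using measure_nonneg[of M "{\<omega>\<in>space M. ?A \<omega> = ?B \<omega>}"] by linarith
qed


theorem mainTheorem15:
  fixes M :: "'a measure" and v :: real and f :: "real \<Rightarrow> real"
    and Wm Wp :: "real \<Rightarrow> 'a \<Rightarrow> real"
  assumes "v > 0"
    and "continuous_on {-1..1} f" and "f 0 = 0"
    and "brownian_motion_on M v (-1) 1 Wm"
    and "brownian_motion_on M v (-1) 1 Wp"
    and "measure M {\<omega>\<in>space M. reflMinus0 f Wm \<omega> > f 0} = 1"
  shows "measure M {\<omega>\<in>space M. sigmaMinus f Wm \<omega> < 1}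
       + measure M {\<omega>\<in>space M. sigmaPlus f Wp \<omega> > -1} = 1"
proof -
  note v = assms(1) and f = assms(2) and bm1 = assms(4) and bm2 = assms(5) and hyp = assms(6)
  interpret prob_space M using bmD(1)[OF bm1] .
  have [measurable]: "gsup f Wm (-1) 0 \<in> borel_measurable M" "gsup f Wm 0 1 \<in> borel_measurable M"
    "gsup f Wp (-1) 0 \<in> borel_measurable M" "gsup f Wp 0 1 \<in> borel_measurable M"
    using gsup_meas[OF f bm1] gsup_meas[OF f bm2] by auto
  define a where "a = measure M {\<omega>\<in>space M. gsup f Wm (-1) 0 \<omega> > gsup f Wm 0 1 \<omega>}"
  define b where "b = measure M {\<omega>\<in>space M. gsup f Wm 0 1 \<omega> > gsup f Wm (-1) 0 \<omega>}"
  have ap: "measure M {\<omega>\<in>space M. gsup f Wp (-1) 0 \<omega> > gsup f Wp 0 1 \<omega>} = a"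
    unfolding a_def using law_gt[OF f bm1 bm2] by simp
  have bp: "measure M {\<omega>\<in>space M. gsup f Wp 0 1 \<omega> > gsup f Wp (-1) 0 \<omega>} = b"
    unfolding b_def using law_lt[OF f bm1 bm2] by simp
  have compl: "measure M {\<omega>\<in>space M. gsup f W (-1) 0 \<omega> \<ge> gsup f W 0 1 \<omega>}
      = 1 - measure M {\<omega>\<in>space M. gsup f W 0 1 \<omega> > gsup f W (-1) 0 \<omega>}"
    if [measurable]: "gsup f W (-1) 0 \<in> borel_measurable M" "gsup f W 0 1 \<in> borel_measurable M" for W
  proof -
    have "{\<omega>\<in>space M. gsup f W (-1) 0 \<omega> \<ge> gsup f W 0 1 \<omega>}
       = space M - {\<omega>\<in>space M. gsup f W 0 1 \<omega> > gsup f W (-1) 0 \<omega>}" by auto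
    thus ?thesis by (simp add: prob_compl)
  qed
  have compl2: "measure M {\<omega>\<in>space M. gsup f Wm 0 1 \<omega> \<ge> gsup f Wm (-1) 0 \<omega>} = 1 - a"
  proof -
    have "{\<omega>\<in>space M. gsup f Wm 0 1 \<omega> \<ge> gsup f Wm (-1) 0 \<omega>}
       = space M - {\<omega>\<in>space M. gsup f Wm (-1) 0 \<omega> > gsup f Wm 0 1 \<omega>}" by auto
    thus ?thesis unfolding a_def by (simp add: prob_compl)
  qed
  have T: "measure M {\<omega>\<in>space M. gsup f Wm (-1) 0 \<omega> = gsup f Wm 0 1 \<omega>} = 0"
    by (rule tie[OF f bm1 v hyp])
  have split: "measure M {\<omega>\<in>space M. gsup f Wm (-1) 0 \<omega> \<ge> gsup f Wm 0 1 \<omega>}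
     = a + measure M {\<omega>\<in>space M. gsup f Wm (-1) 0 \<omega> = gsup f Wm 0 1 \<omega>}"
  proof -
    have "{\<omega>\<in>space M. gsup f Wm (-1) 0 \<omega> \<ge> gsup f Wm 0 1 \<omega>}
       = {\<omega>\<in>space M. gsup f Wm (-1) 0 \<omega> > gsup f Wm 0 1 \<omega>} \<union> {\<omega>\<in>space M. gsup f Wm (-1) 0 \<omega> = gsup f Wm 0 1 \<omega>}"
      by auto
    moreover have "{\<omega>\<in>space M. gsup f Wm (-1) 0 \<omega> > gsup f Wm 0 1 \<omega>} \<in> events" by measurable
    moreover have "{\<omega>\<in>space M. gsup f Wm (-1) 0 \<omega> = gsup f Wm 0 1 \<omega>} \<in> events" by measurable
    ultimately show ?thesis unfolding a_def by (subst finite_measure_Union[symmetric]) auto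
  qed
  have ab: "a + b = 1" using compl[of Wm, OF gsup_meas[OF f bm1] gsup_meas[OF f bm1]] split T unfolding b_def by linarith
  have s1: "b \<le> measure M {\<omega>\<in>space M. sigmaMinus f Wm \<omega> < 1}"
    unfolding b_def by (intro finite_measure_mono sandwich[OF f bm1])
  have s2: "measure M {\<omega>\<in>space M. sigmaMinus f Wm \<omega> < 1} \<le> 1 - a"
    unfolding compl2[symmetric] by (intro finite_measure_mono sandwich[OF f bm1]) measurable
  have s3: "a \<le> measure M {\<omega>\<in>space M. sigmaPlus f Wp \<omega> > -1}"
    unfolding ap[symmetric] by (intro finite_measure_mono sandwich[OF f bm2])
  have s4: "measure M {\<omega>\<in>space M. sigmaPlus f Wp \<omega> > -1} \<le> 1 - b"
  proof -
    have e: "measure M {\<omega>\<in>space M. gsup f Wp (-1) 0 \<omega> \<ge> gsup f Wp 0 1 \<omega>} = 1 - b"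
      using compl[of Wp, OF gsup_meas[OF f bm2] gsup_meas[OF f bm2]] bp by simp
    have "measure M {\<omega>\<in>space M. sigmaPlus f Wp \<omega> > -1} \<le> measure M {\<omega>\<in>space M. gsup f Wp (-1) 0 \<omega> \<ge> gsup f Wp 0 1 \<omega>}"
      by (intro finite_measure_mono sandwich[OF f bm2]) measurable
    thus ?thesis using e by simp
  qed
  show ?thesis using s1 s2 s3 s4 ab by linarith
qed


end
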